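(* Let $n\ge2$ and let $A\subset\mathbb R^n$ be closed with $\mathrm{Outrad}(A)<1$. Let $A_0=A$ and for $j=0,1,2,\dots$ define \[ A_{j+1}=\bigcup\{\mathrm{conv}_c(\{x,y\}):x,y\in A_j\}. \] Then $A_j\subseteq\mathrm{conv}_c(A)$ for all $j$, and $A_j=\mathrm{conv}_c(A)$ whenever $2^j>n$.
   Context: $B(x,r)$ is the closed Euclidean ball. For $A\subseteq\mathbb R^n$, $A^c=\bigcap_{x\in A}B(x,1)$ (with $\emptyset^c=\mathbb R^n$), and the $c$-hull is $\mathrm{conv}_c(A)=A^{cc}$. $\mathrm{Outrad}(A)$ is the infimum of $R$ such that $A\subseteq B(z,R)$ for some $z$. *)

theory Defs
  imports "HOL-Analysis.Analysis"
begin

text \<open>c-dual: intersection of closed unit balls centred at points of A (empty intersection = UNIV).\<close>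
definition cdual :: "'a::euclidean_space set \<Rightarrow> 'a set" where
  "cdual A = (\<Inter>x\<in>A. cball x 1)"

definition conv_c :: "'a::euclidean_space set \<Rightarrow> 'a set" where
  "conv_c A = cdual (cdual A)"

definition Outrad :: "'a::euclidean_space set \<Rightarrow> real" where
  "Outrad A = Inf {R. \<exists>z. A \<subseteq> cball z R}"

primrec cseq :: "'a::euclidean_space set \<Rightarrow> nat \<Rightarrow> 'a set" where
  "cseq A 0 = A"
| "cseq A (Suc j) = (\<Union>x\<in>cseq A j. \<Union>y\<in>cseq A j. conv_c {x, y})"

end

theory Submission
  imports Defs
begin

lemma mem_cdual: "c \<in> cdual A \<longleftrightarrow> (\<forall>a\<in>A. dist a c \<le> 1)"
  by (auto simp: cdual_def)

lemma mem_conv_c: "x \<in> conv_c A \<longleftrightarrow> (\<forall>c. (\<forall>a\<in>A. dist a c \<le> 1) \<longrightarrow> dist c x \<le> 1)"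
  by (auto simp: conv_c_def cdual_def)

lemma cdual_antimono: "A \<subseteq> B \<Longrightarrow> cdual B \<subseteq> cdual A"
  by (auto simp: cdual_def)

lemma conv_c_mono: "A \<subseteq> B \<Longrightarrow> conv_c A \<subseteq> conv_c B"
  unfolding conv_c_def by (intro cdual_antimono)

lemma sub_conv_c: "A \<subseteq> conv_c A"
proof
  fix x assume "x \<in> A"
  then show "x \<in> conv_c A" unfolding mem_conv_c by (metis dist_commute)
qed

lemma cdual_conv_c: "cdual (conv_c A) = cdual A"
proof
  show "cdual (conv_c A) \<subseteq> cdual A" by (rule cdual_antimono[OF sub_conv_c])
  show "cdual A \<subseteq> cdual (conv_c A)"
  proof
    fix c assume c: "c \<in> cdual A"
    show "c \<in> cdual (conv_c A)" unfolding mem_cdual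
    proof
      fix x assume "x \<in> conv_c A"
      then have "dist c x \<le> 1" using c by (auto simp: mem_conv_c mem_cdual)
      then show "dist x c \<le> 1" by (simp add: dist_commute)
    qed
  qed
qed

lemma conv_c_idem: "conv_c (conv_c A) = conv_c A"
  by (simp add: conv_c_def cdual_conv_c[unfolded conv_c_def])

lemma conv_c_subset: "A \<subseteq> conv_c B \<Longrightarrow> conv_c A \<subseteq> conv_c B"
  using conv_c_mono conv_c_idem by metis

lemma convex_conv_c: "convex (conv_c A)"
  unfolding conv_c_def cdual_def by (intro convex_INT) auto

lemma hull_sub_conv_c: "convex hull A \<subseteq> conv_c A"
  by (intro hull_minimal sub_conv_c convex_conv_c)

lemma conv_c_singleton: "conv_c {a} = {a}"
proof
  show "{a} \<subseteq> conv_c {a}" using sub_conv_c by blast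
  show "conv_c {a} \<subseteq> {a}"
  proof
    fix x assume x: "x \<in> conv_c {a}"
    show "x \<in> {a}"
    proof (rule ccontr)
      assume "x \<notin> {a}"
      then have nz: "norm (a - x) > 0" by auto
      define c where "c = a + (1 / norm (a - x)) *\<^sub>R (a - x)"
      have "dist a c \<le> 1" using nz by (simp add: c_def dist_norm)
      then have "dist c x \<le> 1" using x by (auto simp: mem_conv_c)
      moreover have "c - x = (1 + 1 / norm (a - x)) *\<^sub>R (a - x)"
        by (simp add: c_def algebra_simps)
      then have "dist c x = (1 + 1 / norm (a - x)) * norm (a - x)"
        using nz by (simp add: dist_norm)
      then have "dist c x = 1 + norm (a - x)"
        using nz by (simp add: field_simps)
      ultimately show False using nz by simp
    qed
  qed
qed

lemma conv_c_far:
  assumes "dist x y > 2"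
  shows "conv_c {x, y} = UNIV"
proof -
  have "cdual {x, y} = {}"
  proof (rule ccontr)
    assume "cdual {x, y} \<noteq> {}"
    then obtain c where "dist x c \<le> 1" "dist y c \<le> 1" by (auto simp: mem_cdual)
    then have "dist x y \<le> 2" using dist_triangle3[of x y c] by (simp add: dist_commute)
    then show False using assms by simp
  qed
  then show ?thesis by (simp add: conv_c_def cdual_def)
qed

lemma cseq_Suc_mono: "cseq A j \<subseteq> cseq A (Suc j)"
proof
  fix x assume "x \<in> cseq A j"
  moreover have "x \<in> conv_c {x, x}" using sub_conv_c by blast
  ultimately show "x \<in> cseq A (Suc j)" by (simp only: cseq.simps) blast
qed

lemma cseq_mono: "j \<le> k \<Longrightarrow> cseq A j \<subseteq> cseq A k"
  using lift_Suc_mono_le[of "cseq A", OF cseq_Suc_mono] by blast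

lemma cseq_sub: "cseq A j \<subseteq> conv_c A"
proof (induction j)
  case 0 then show ?case using sub_conv_c by simp
next
  case (Suc j)
  have "conv_c {x, y} \<subseteq> conv_c A" if "x \<in> cseq A j" "y \<in> cseq A j" for x y
    using that Suc by (intro conv_c_subset) auto
  then show ?case by auto
qed

lemma conv_c_in_ball:
  assumes "r < 1" "A \<subseteq> cball z r"
  shows "conv_c A \<subseteq> cball z r"
proof
  fix x assume x: "x \<in> conv_c A"
  show "x \<in> cball z r"
  proof (cases "x = z")
    case True
    show ?thesis
    proof (cases "A = {}")
      case True
      have "cdual A = UNIV" using True by (simp add: cdual_def)
      moreover have "z + (2::real) *\<^sub>R (SOME v. norm v = 1) \<in> UNIV" by simp
      ultimately have "dist (z + (2::real) *\<^sub>R (SOME v::'a. norm v = 1)) x \<le> 1"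
        using x unfolding conv_c_def by (auto simp: cdual_def)
      moreover have "norm (SOME v::'a. norm v = 1) = 1"
        by (rule someI_ex) (metis norm_Basis SOME_Basis)
      ultimately show ?thesis using \<open>x = z\<close> by (simp add: dist_norm)
    next
      case False
      then obtain a where "a \<in> A" by auto
      then have "0 \<le> r" using assms(2) by (meson subsetD mem_cball zero_le_dist order_trans)
      then show ?thesis using True by simp
    qed
  next
    case False
    then have nz: "norm (x - z) > 0" by auto
    define c where "c = z - ((1 - r) / norm (x - z)) *\<^sub>R (x - z)"
    have "dist a c \<le> 1" if "a \<in> A" for a
    proof -
      have "dist a c \<le> dist a z + dist z c" by (rule dist_triangle)
      also have "dist z c = 1 - r" using nz assms(1) by (simp add: c_def dist_norm)
      also have "dist a z \<le> r" using that assms(2) by (auto simp: mem_cball dist_commute)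
      finally show ?thesis by simp
    qed
    then have dcx: "dist c x \<le> 1" using x by (auto simp: mem_conv_c)
    have "x - c = (1 + (1 - r) / norm (x - z)) *\<^sub>R (x - z)"
      by (simp add: c_def algebra_simps)
    then have "dist c x = (1 + (1 - r) / norm (x - z)) * norm (x - z)"
      using nz assms(1) by (simp add: dist_norm norm_minus_commute[of c x])
    moreover have "(1 + (1 - r) / norm (x - z)) * norm (x - z) = norm (x - z) + (1 - r)"
      using nz by (simp add: distrib_right)
    ultimately have "dist c x = norm (x - z) + (1 - r)" by simp
    then show ?thesis using assms(1) dcx by (simp add: mem_cball dist_norm norm_minus_commute)
  qed
qed

lemma conv_c_translate:
  "x \<in> conv_c A \<longleftrightarrow> x + v \<in> conv_c ((\<lambda>a. a + v) ` A)"
proof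
  assume x: "x \<in> conv_c A"
  show "x + v \<in> conv_c ((\<lambda>a. a + v) ` A)"
    unfolding mem_conv_c
  proof (intro allI impI)
    fix c assume "\<forall>a\<in>(\<lambda>a. a + v) ` A. dist a c \<le> 1"
    then have "\<forall>a\<in>A. dist a (c - v) \<le> 1" by (auto simp: dist_norm algebra_simps)
    then have "dist (c - v) x \<le> 1" using x by (auto simp: mem_conv_c)
    then show "dist c (x + v) \<le> 1" by (simp add: dist_norm algebra_simps)
  qed
next
  assume x: "x + v \<in> conv_c ((\<lambda>a. a + v) ` A)"
  show "x \<in> conv_c A"
    unfolding mem_conv_c
  proof (intro allI impI)
    fix c assume "\<forall>a\<in>A. dist a c \<le> 1"
    then have "\<forall>a\<in>(\<lambda>a. a + v) ` A. dist a (c + v) \<le> 1" by (auto simp: dist_norm algebra_simps)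
    then have "dist (c + v) (x + v) \<le> 1" using x unfolding mem_conv_c by blast
    moreover have "dist (c + v) (x + v) = dist c x" by (simp add: dist_norm)
    ultimately show "dist c x \<le> 1" by simp
  qed
qed

lemma nd2: "norm (x - y)^2 = norm x^2 - 2 * (x \<bullet> y) + norm y^2"
  for x y :: "'a::real_inner"
  by (simp add: power2_norm_eq_inner inner_diff_left inner_diff_right inner_commute)

lemma ns2: "norm (x + y)^2 = norm x^2 + 2 * (x \<bullet> y) + norm y^2"
  for x y :: "'a::real_inner"
  by (simp add: power2_norm_eq_inner inner_add_left inner_add_right inner_commute)

definition cinv :: "'a::euclidean_space \<Rightarrow> 'a \<Rightarrow> 'a" where
  "cinv p x = (1 / (norm (x - p))^2) *\<^sub>R (x - p)"

lemma cinv_norm: "x \<noteq> p \<Longrightarrow> norm (cinv p x) = 1 / norm (x - p)"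
proof -
  assume "x \<noteq> p"
  then have n: "norm (x - p) > 0" by simp
  have "norm (cinv p x) = (1 / (norm (x - p))^2) * norm (x - p)"
    unfolding cinv_def by simp
  also have "\<dots> = 1 / norm (x - p)" using n by (simp add: power2_eq_square)
  finally show ?thesis .
qed

lemma cap_iff:
  fixes w x p :: "'a::euclidean_space"
  assumes "norm w = 1" "x \<noteq> p"
  shows "w \<bullet> cinv p x > 1/2 \<longleftrightarrow> dist x (p + w) < 1"
proof -
  have nz: "norm (x - p) > 0" using assms(2) by simp
  have xe: "x - (p + w) = (x - p) - w" by simp
  have e: "dist x (p + w)^2 = norm (x - p)^2 - 2 * ((x - p) \<bullet> w) + 1"
    unfolding dist_norm xe nd2 using assms(1) by simp
  have i: "w \<bullet> cinv p x = ((x - p) \<bullet> w) / norm (x - p)^2"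
    unfolding cinv_def by (simp add: inner_commute)
  have "dist x (p + w) < 1 \<longleftrightarrow> dist x (p + w)^2 < 1"
    using power_less_one_iff[of "dist x (p + w)" 2] by simp
  also have "\<dots> \<longleftrightarrow> norm (x - p)^2 < 2 * ((x - p) \<bullet> w)"
    unfolding e by linarith
  also have "\<dots> \<longleftrightarrow> ((x - p) \<bullet> w) / norm (x - p)^2 > 1/2"
    using nz by (simp add: field_simps)
  finally show ?thesis unfolding i by simp
qed

lemma continuous_on_cinv: "p \<notin> S \<Longrightarrow> continuous_on S (cinv p)"
  unfolding cinv_def
  by (intro continuous_intros) auto

lemma K_iff:
  fixes S :: "'a::euclidean_space set"
  assumes r: "r < 1" and Sb: "S \<subseteq> cball z0 r" and cS: "compact S" and Sne: "S \<noteq> {}"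
    and pz: "dist p z0 < 1" and pS: "p \<notin> S"
  shows "p \<in> conv_c S \<longleftrightarrow> (\<exists>y \<in> convex hull (cinv p ` S). norm y \<le> 1/2)"
proof
  assume pC: "p \<in> conv_c S"
  show "\<exists>y \<in> convex hull (cinv p ` S). norm y \<le> 1/2"
  proof (rule ccontr)
    assume "\<not> ?thesis"
    then have far: "\<forall>y \<in> convex hull (cinv p ` S). norm y > 1/2" by auto
    let ?H = "convex hull (cinv p ` S)"
    have cH: "compact ?H"
      by (intro compact_convex_hull compact_continuous_image continuous_on_cinv pS cS)
    have Hne: "?H \<noteq> {}" using Sne by simp
    have disj: "?H \<inter> cball 0 (1/2) = {}" using far by (auto simp: mem_cball dist_norm)
    obtain a b where ab1: "\<forall>x\<in>?H. inner a x < b" and ab2: "\<forall>x\<in>cball 0 (1/2). inner a x > b"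
      using separating_hyperplane_compact_closed[OF convex_convex_hull cH Hne convex_cball closed_cball disj]
      by blast
    have "(0::'a) \<in> cball 0 (1/2)" by simp
    then have "b < a \<bullet> 0" by (rule bspec[OF ab2])
    then have b0: "b < 0" by simp
    have anz: "a \<noteq> 0"
    proof
      assume "a = 0"
      obtain h where "h \<in> ?H" using Hne by blast
      then have "inner a h < b" using ab1 by blast
      then show False using \<open>a = 0\<close> b0 by simp
    qed
    then have na: "norm a > 0" by simp
    define v where "v = (- (1 / (2 * norm a))) *\<^sub>R a"
    have "norm v = 1/2" using na by (simp add: v_def)
    then have "v \<in> cball 0 (1/2)" by (simp add: mem_cball dist_norm)
    then have "inner a v > b" using ab2 by blast
    moreover have "inner a v = - (1 / (2 * norm a)) * norm a^2"
      by (simp add: v_def power2_norm_eq_inner)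
    moreover have "- (1 / (2 * norm a)) * norm a^2 = - norm a / 2"
      using na by (simp add: power2_eq_square)
    ultimately have bl: "b < - norm a / 2" by simp
    define w where "w = - (1 / norm a) *\<^sub>R a"
    have nw: "norm w = 1" using na by (simp add: w_def)
    have wH: "w \<bullet> y > 1/2" if "y \<in> ?H" for y
    proof -
      have "inner a y < b" using ab1 that by blast
      then have "inner a y < - norm a / 2" using bl by simp
      then have "- inner a y / norm a > 1/2" using na by (simp add: field_simps)
      moreover have "w \<bullet> y = - inner a y / norm a" by (simp add: w_def)
      ultimately show ?thesis by simp
    qed
    have inball: "dist s (p + w) < 1" if "s \<in> S" for s
    proof -
      have "cinv p s \<in> ?H" by (rule hull_inc) (use that in simp)
      then have "w \<bullet> cinv p s > 1/2" by (rule wH)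
      moreover have "s \<noteq> p" using that pS by auto
      ultimately show ?thesis using cap_iff[OF nw] by blast
    qed
    have contd: "continuous_on S (\<lambda>s. dist s (p + w))" by (intro continuous_intros)
    obtain s0 where s0: "s0 \<in> S" "\<forall>s\<in>S. dist s (p + w) \<le> dist s0 (p + w)"
      using continuous_attains_sup[OF cS Sne contd] by blast
    define M where "M = dist s0 (p + w)"
    have M1: "M < 1" using inball s0(1) by (simp add: M_def)
    define c where "c = p + (2 - M) *\<^sub>R w"
    have dpc: "dist (p + w) c = 1 - M"
    proof -
      have "(p + w) - c = (M - 1) *\<^sub>R w" by (simp add: c_def algebra_simps scaleR_2)
      then have "dist (p + w) c = \<bar>M - 1\<bar> * norm w" by (simp add: dist_norm)
      then show ?thesis using M1 nw by simp
    qed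
    have "dist s c \<le> 1" if "s \<in> S" for s
    proof -
      have "dist s c \<le> dist s (p + w) + dist (p + w) c" by (rule dist_triangle)
      also have "dist s (p + w) \<le> M" using s0 that by (simp add: M_def)
      finally show ?thesis using dpc by simp
    qed
    then have "dist c p \<le> 1" using pC by (auto simp: mem_conv_c)
    moreover have "dist c p = 2 - M"
    proof -
      have "c - p = (2 - M) *\<^sub>R w" by (simp add: c_def)
      then have "dist c p = \<bar>2 - M\<bar> * norm w" by (simp add: dist_norm)
      then show ?thesis using M1 nw by simp
    qed
    ultimately show False using M1 by simp
  qed
next
  assume "\<exists>y \<in> convex hull (cinv p ` S). norm y \<le> 1/2"
  then obtain y where yH: "y \<in> convex hull (cinv p ` S)" and ny: "norm y \<le> 1/2" by blast
  show "p \<in> conv_c S"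
  proof (rule ccontr)
    assume "p \<notin> conv_c S"
    then obtain c where cS1: "\<forall>a\<in>S. dist a c \<le> 1" and cp: "dist c p > 1"
      unfolding mem_conv_c by (auto simp: not_le)
    define g where "g = (\<lambda>t::real. dist p ((1 - t) *\<^sub>R c + t *\<^sub>R z0))"
    have gc: "continuous_on {0..1} g" unfolding g_def by (intro continuous_intros)
    have g0: "g 0 > 1" using cp by (simp add: g_def dist_commute)
    have g1: "g 1 < 1" using pz by (simp add: g_def)
    obtain t where t: "0 \<le> t" "t \<le> 1" "g t = 1"
      using IVT2'[of g 1 1 0] gc g0 g1 by auto
    have tpos: "t > 0" using t g0 by (cases "t = 0") auto
    define c' where "c' = (1 - t) *\<^sub>R c + t *\<^sub>R z0"
    have sc': "dist s c' < 1" if "s \<in> S" for s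
    proof -
      have "s - c' = (1 - t) *\<^sub>R (s - c) + t *\<^sub>R (s - z0)"
        by (simp add: c'_def algebra_simps)
      then have "norm (s - c') \<le> norm ((1 - t) *\<^sub>R (s - c)) + norm (t *\<^sub>R (s - z0))"
        by (metis norm_triangle_ineq)
      also have "\<dots> = (1 - t) * dist s c + t * dist s z0"
        using t by (simp add: dist_norm)
      also have "\<dots> \<le> (1 - t) * 1 + t * r"
      proof (intro add_mono mult_left_mono)
        show "dist s c \<le> 1" using cS1 that by blast
        show "dist s z0 \<le> r" using Sb that by (auto simp: mem_cball dist_commute)
      qed (use t in auto)
      also have "\<dots> < 1" using tpos r by (simp add: algebra_simps)
      finally show ?thesis by (simp add: dist_norm)
    qed
    define w where "w = c' - p"
    have nw: "norm w = 1" using t(3) by (simp add: g_def w_def c'_def dist_norm norm_minus_commute)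
    have "cinv p ` S \<subseteq> {x. 1/2 < w \<bullet> x}"
    proof
      fix x assume "x \<in> cinv p ` S"
      then obtain s where s: "s \<in> S" "x = cinv p s" by auto
      have "s \<noteq> p" using s pS by auto
      moreover have "dist s (p + w) < 1" using sc'[OF s(1)] by (simp add: w_def)
      ultimately show "x \<in> {x. 1/2 < w \<bullet> x}" using cap_iff[OF nw] s by auto
    qed
    then have "convex hull (cinv p ` S) \<subseteq> {x. 1/2 < w \<bullet> x}"
      by (intro hull_minimal convex_halfspace_gt)
    then have "w \<bullet> y > 1/2" using yH by auto
    moreover have "w \<bullet> y \<le> norm w * norm y" by (rule norm_cauchy_schwarz)
    ultimately show False using nw ny by simp
  qed
qed

lemma sph_comb:
  fixes oc a b :: "'a::euclidean_space"
  assumes R: "R \<ge> 1" and ra: "norm (a - oc) = R" and rb: "norm (b - oc) = R"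
    and ma: "ma \<ge> 0" and mb: "mb \<ge> 0"
    and V: "V = ma *\<^sub>R (a - oc) + mb *\<^sub>R (b - oc)" and Vnz: "V \<noteq> 0"
  shows "oc + (R / norm V) *\<^sub>R V \<in> conv_c {a, b}"
  unfolding mem_conv_c
proof (intro allI impI)
  fix c assume "\<forall>x\<in>{a, b}. dist x c \<le> 1"
  then have ac: "dist a c \<le> 1" and bc: "dist b c \<le> 1" by auto
  define d where "d = c - oc"
  define Q where "Q = R^2 - 1 + norm d^2"
  have R2: "R^2 \<ge> 1" using R by (simp add: one_le_power)
  have Q0: "Q \<ge> 0" using R2 by (simp add: Q_def)
  have ha: "2 * ((a - oc) \<bullet> d) \<ge> Q"
  proof -
    have e: "a - c = (a - oc) - d" by (simp add: d_def)
    have "norm (a - c) \<le> 1" using ac by (simp add: dist_norm)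
    then have "norm (a - c)^2 \<le> 1" by (simp add: power_le_one)
    then have "norm ((a - oc) - d)^2 \<le> 1" by (simp only: e)
    then show ?thesis unfolding nd2 ra Q_def by simp
  qed
  have hb: "2 * ((b - oc) \<bullet> d) \<ge> Q"
  proof -
    have e: "b - c = (b - oc) - d" by (simp add: d_def)
    have "norm (b - c) \<le> 1" using bc by (simp add: dist_norm)
    then have "norm (b - c)^2 \<le> 1" by (simp add: power_le_one)
    then have "norm ((b - oc) - d)^2 \<le> 1" by (simp only: e)
    then show ?thesis unfolding nd2 rb Q_def by simp
  qed
  have nV: "norm V > 0" using Vnz by simp
  have Vd: "2 * (V \<bullet> d) \<ge> (ma + mb) * Q"
  proof -
    have "2 * (V \<bullet> d) = ma * (2 * ((a - oc) \<bullet> d)) + mb * (2 * ((b - oc) \<bullet> d))"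
      by (simp add: V inner_add_left algebra_simps)
    also have "\<dots> \<ge> ma * Q + mb * Q"
      using ha hb ma mb by (intro add_mono mult_left_mono) auto
    finally show ?thesis by (simp add: algebra_simps)
  qed
  have nVle: "norm V \<le> (ma + mb) * R"
  proof -
    have "norm V \<le> norm (ma *\<^sub>R (a - oc)) + norm (mb *\<^sub>R (b - oc))"
      unfolding V by (rule norm_triangle_ineq)
    also have "\<dots> = ma * R + mb * R" using ma mb ra rb by (simp only: norm_scaleR abs_of_nonneg)
    also have "\<dots> = (ma + mb) * R" by (simp add: algebra_simps)
    finally show ?thesis .
  qed
  have Rpos: "R > 0" using R by simp
  have "norm V / R \<le> ma + mb" using nVle Rpos by (simp add: divide_le_eq)
  then have "(norm V / R) * Q \<le> (ma + mb) * Q"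
    using Q0 by (rule mult_right_mono)
  then have "(norm V / R) * Q \<le> 2 * (V \<bullet> d)" using Vd by linarith
  then have key: "Q \<le> 2 * (R / norm V) * (V \<bullet> d)"
    using nV Rpos by (simp add: field_simps)
  have n1: "norm ((R / norm V) *\<^sub>R V) = R" using nV Rpos by simp
  have "norm ((R / norm V) *\<^sub>R V - d)^2 = R^2 - 2 * ((R / norm V) * (V \<bullet> d)) + norm d^2"
    unfolding nd2 n1 inner_scaleR_left by simp
  then have "norm ((R / norm V) *\<^sub>R V - d)^2 \<le> 1" using key by (simp add: Q_def)
  then have "norm ((R / norm V) *\<^sub>R V - d) \<le> 1"
    by (simp add: power_le_one_iff)
  moreover have "c - (oc + (R / norm V) *\<^sub>R V) = - ((R / norm V) *\<^sub>R V - d)"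
    by (simp add: d_def)
  ultimately show "dist c (oc + (R / norm V) *\<^sub>R V) \<le> 1"
    unfolding dist_norm by (metis norm_minus_cancel)
qed

lemma cinv0: "cinv 0 x = (1 / norm x ^ 2) *\<^sub>R x"
  by (simp add: cinv_def)

lemma final_alg:
  fixes ya yb eta m u :: "'a::euclidean_space"
  assumes m: "m = am *\<^sub>R ya + bm *\<^sub>R yb + eta"
    and u: "u = (1 - lam) *\<^sub>R ya + lam *\<^sub>R yb"
    and c1: "c1 = 1 - lam + t * (1 - lam - am)"
    and c2: "c2 = lam + t * (lam - bm)"
    and c3: "c3 = - t"
  shows "c1 *\<^sub>R ya + c2 *\<^sub>R yb + c3 *\<^sub>R eta = u + t *\<^sub>R (u - m)"
  unfolding m u c1 c2 c3 by (simp add: algebra_simps)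

lemma G:
  fixes ya yb eta m u :: "'a::euclidean_space" and x :: "real \<Rightarrow> 'a"
    and ka kb kc :: "real \<Rightarrow> real"
  assumes m: "m = am *\<^sub>R ya + bm *\<^sub>R yb + eta"
    and e: "e = 1 - am - bm"
    and u: "u = (1 - lam) *\<^sub>R ya + lam *\<^sub>R yb" and lam: "0 \<le> lam" "lam \<le> 1"
    and H1: "\<And>s. s \<in> {0..1} \<Longrightarrow> x s = ka s *\<^sub>R ya + kb s *\<^sub>R yb + kc s *\<^sub>R eta"
    and H2: "\<And>s. s \<in> {0..1} \<Longrightarrow> norm (x s)^2 = ka s + kb s + kc s * e"
    and H3: "\<And>s. s \<in> {0..1} \<Longrightarrow> x s \<noteq> 0"
    and H4: "\<And>s. s \<in> {0..1} \<Longrightarrow> kc s \<le> 0"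
    and c1: "continuous_on {0..1} ka" and c2: "continuous_on {0..1} kb"
    and c3: "continuous_on {0..1} kc"
    and H5: "kb 0 = 0" "kc 0 = 0" "ka 1 = 0" "kc 1 = 0"
  shows "\<exists>s\<in>{0..1}. - kc s / norm (x s)^2 \<ge> 0 \<and> cinv 0 (x s) = u + (- kc s / norm (x s)^2) *\<^sub>R (u - m)"
proof -
  define L where "L s = ka s + kb s + kc s * e" for s
  have Lpos: "L s > 0" if "s \<in> {0..1}" for s
  proof -
    have "norm (x s)^2 = L s" using H2[OF that] by (simp add: L_def)
    moreover have "norm (x s) > 0" using H3[OF that] by simp
    ultimately show ?thesis by (metis zero_less_power)
  qed
  define h where "h s = kb s / L s - lam + (kc s / L s) * (lam - bm)" for s
  have Lc: "continuous_on {0..1} L" unfolding L_def[abs_def]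
    by (intro continuous_intros c1 c2 c3)
  have hc: "continuous_on {0..1} h"
  proof -
    have "\<forall>s\<in>{0..1}. L s \<noteq> 0" using Lpos by (metis less_irrefl)
    then show ?thesis unfolding h_def[abs_def] by (intro continuous_intros c2 c3 Lc) auto
  qed
  have h0: "h 0 = - lam" by (simp add: h_def H5)
  have L1: "L 1 = kb 1" by (simp add: L_def H5)
  have "L 1 > 0" using Lpos by simp
  then have h1: "h 1 = 1 - lam" by (simp add: h_def H5 L1)
  obtain s where s: "0 \<le> s" "s \<le> 1" "h s = 0"
    using IVT'[of h 0 0 1] hc h0 h1 lam by auto
  have sI: "s \<in> {0..1}" using s by simp
  define t where "t = - kc s / L s"
  have t0: "t \<ge> 0" using H4[OF sI] Lpos[OF sI] by (simp add: t_def divide_nonpos_pos)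
  have Ls: "L s > 0" using Lpos[OF sI] .
  have "cinv 0 (x s) = (1 / L s) *\<^sub>R x s"
    unfolding cinv0 using H2[OF sI] by (simp add: L_def)
  also have "\<dots> = (ka s / L s) *\<^sub>R ya + (kb s / L s) *\<^sub>R yb + (kc s / L s) *\<^sub>R eta"
    unfolding H1[OF sI] by (simp add: algebra_simps)
  also have "\<dots> = u + t *\<^sub>R (u - m)"
  proof (rule final_alg[OF m u])
    show c3': "kc s / L s = - t" by (simp add: t_def)
    show c2': "kb s / L s = lam + t * (lam - bm)"
      using s(3) by (simp add: h_def t_def algebra_simps)
    have "ka s / L s + kb s / L s + (kc s / L s) * e = 1"
      using Ls unfolding L_def by (simp add: add_divide_distrib[symmetric])
    then show "ka s / L s = 1 - lam + t * (1 - lam - am)"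
      using c2' c3' e by (simp add: algebra_simps)
  qed
  finally have "cinv 0 (x s) = u + t *\<^sub>R (u - m)" .
  moreover have "L s = norm (x s)^2" using H2[OF sI] by (simp add: L_def)
  ultimately show ?thesis using sI t0 by (auto simp: t_def)
qed

lemma arc_V_nz:
  fixes a b oc :: "'a::euclidean_space"
  assumes R: "R \<ge> 1" and ra: "norm (a - oc) = R" and rb: "norm (b - oc) = R"
    and ab: "dist a b < 2" and s: "s \<in> {0..1}"
  shows "(1 - s) *\<^sub>R (a - oc) + s *\<^sub>R (b - oc) \<noteq> 0"
proof
  assume V0: "(1 - s) *\<^sub>R (a - oc) + s *\<^sub>R (b - oc) = 0"
  then have e1: "(1 - s) *\<^sub>R (a - oc) = - (s *\<^sub>R (b - oc))"
    by (simp add: eq_neg_iff_add_eq_0)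
  have "norm ((1 - s) *\<^sub>R (a - oc)) = norm (s *\<^sub>R (b - oc))"
    using e1 by (metis norm_minus_cancel)
  then have "(1 - s) * R = s * R" using s ra rb by simp
  then have sh: "s = 1/2" using R by (simp add: algebra_simps)
  have "(1 - 1/2) *\<^sub>R (a - oc) + (1/2) *\<^sub>R (b - oc) = 0" using V0 unfolding sh .
  then have "(1/2) *\<^sub>R ((a - oc) + (b - oc)) = 0" by (simp add: scaleR_add_right)
  then have "(a - oc) + (b - oc) = 0" by simp
  then have "a - b = 2 *\<^sub>R (a - oc)" by (simp add: algebra_simps scaleR_2)
  then have "dist a b = 2 * R" using ra by (simp add: dist_norm)
  then show False using ab R by simp
qed

lemma arc_V_le:
  fixes a b oc :: "'a::euclidean_space"
  assumes ra: "norm (a - oc) = R" and rb: "norm (b - oc) = R" and s: "s \<in> {0..1}"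
  shows "norm ((1 - s) *\<^sub>R (a - oc) + s *\<^sub>R (b - oc)) \<le> R"
proof -
  have "norm ((1 - s) *\<^sub>R (a - oc) + s *\<^sub>R (b - oc)) \<le> norm ((1 - s) *\<^sub>R (a - oc)) + norm (s *\<^sub>R (b - oc))"
    by (rule norm_triangle_ineq)
  also have "\<dots> = (1 - s) * R + s * R" using s ra rb by simp
  also have "\<dots> = R" by (simp add: algebra_simps)
  finally show ?thesis .
qed

lemma arc_mem:
  fixes a b oc :: "'a::euclidean_space"
  assumes R: "R \<ge> 1" and ra: "norm (a - oc) = R" and rb: "norm (b - oc) = R"
    and ab: "dist a b < 2" and s: "s \<in> {0..1}"
  shows "oc + (R / norm ((1 - s) *\<^sub>R (a - oc) + s *\<^sub>R (b - oc))) *\<^sub>R ((1 - s) *\<^sub>R (a - oc) + s *\<^sub>R (b - oc)) \<in> conv_c {a, b}"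
  using s by (intro sph_comb[OF R ra rb _ _ refl arc_V_nz[OF R ra rb ab s]]) auto

lemma arc_cont:
  fixes a b oc :: "'a::euclidean_space"
  assumes R: "R \<ge> 1" and ra: "norm (a - oc) = R" and rb: "norm (b - oc) = R"
    and ab: "dist a b < 2"
  shows "continuous_on {0..1} (\<lambda>s. R / norm ((1 - s) *\<^sub>R (a - oc) + s *\<^sub>R (b - oc)))"
proof -
  have "\<forall>s\<in>{0..1}. norm ((1 - s) *\<^sub>R (a - oc) + s *\<^sub>R (b - oc)) \<noteq> 0"
    using arc_V_nz[OF R ra rb ab] by simp
  then show ?thesis by (intro continuous_intros) auto
qed

lemma arc_K_ge:
  fixes a b oc :: "'a::euclidean_space"
  assumes R: "R \<ge> 1" and ra: "norm (a - oc) = R" and rb: "norm (b - oc) = R"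
    and ab: "dist a b < 2" and s: "s \<in> {0..1}"
  shows "R / norm ((1 - s) *\<^sub>R (a - oc) + s *\<^sub>R (b - oc)) \<ge> 1"
proof -
  have "norm ((1 - s) *\<^sub>R (a - oc) + s *\<^sub>R (b - oc)) > 0"
    using arc_V_nz[OF R ra rb ab s] by simp
  then show ?thesis using arc_V_le[OF ra rb s] by (simp add: le_divide_eq_1)
qed

lemma arc_K0: "norm (a - oc) = R \<Longrightarrow> R > 0 \<Longrightarrow> R / norm ((1 - 0) *\<^sub>R (a - oc) + 0 *\<^sub>R (b - oc)) = 1"
  by simp

lemma arc_K1: "norm (b - oc) = R \<Longrightarrow> R > 0 \<Longrightarrow> R / norm ((1 - 1) *\<^sub>R (a - oc) + 1 *\<^sub>R (b - oc)) = 1"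
  by simp

lemma arc_form:
  fixes a b oc :: "'a::euclidean_space"
  shows "oc + K *\<^sub>R ((1 - s) *\<^sub>R (a - oc) + s *\<^sub>R (b - oc)) =
         (1 - K) *\<^sub>R oc + (K * (1 - s)) *\<^sub>R a + (K * s) *\<^sub>R b"
  by (simp add: algebra_simps)

lemma arc_normsq:
  fixes x oc :: "'a::euclidean_space"
  assumes "norm (x - oc) = norm oc"
  shows "norm x ^ 2 = 2 * (x \<bullet> oc)"
proof -
  have "norm (x - oc)^2 = norm oc^2" using assms by simp
  then show ?thesis unfolding nd2 by simp
qed

lemma arc_x_dist:
  fixes a b oc :: "'a::euclidean_space"
  assumes R: "R \<ge> 1" and ra: "norm (a - oc) = R" and rb: "norm (b - oc) = R"
    and ab: "dist a b < 2" and s: "s \<in> {0..1}"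
  shows "norm ((oc + (R / norm ((1 - s) *\<^sub>R (a - oc) + s *\<^sub>R (b - oc))) *\<^sub>R ((1 - s) *\<^sub>R (a - oc) + s *\<^sub>R (b - oc))) - oc) = R"
proof -
  have "norm ((1 - s) *\<^sub>R (a - oc) + s *\<^sub>R (b - oc)) > 0"
    using arc_V_nz[OF R ra rb ab s] by simp
  then show ?thesis using R by simp
qed

lemma cinv_dist_o:
  fixes y oc :: "'a::euclidean_space"
  assumes "y \<noteq> 0" "oc \<bullet> y = 1/2"
  shows "norm (cinv 0 y - oc) = norm oc"
proof -
  have ny: "norm y > 0" using assms(1) by simp
  have "norm (cinv 0 y)^2 = 1 / norm y ^2"
    using cinv_norm[of y 0] assms(1) by (simp add: power_divide)
  moreover have "cinv 0 y \<bullet> oc = (oc \<bullet> y) / norm y ^2"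
    by (simp add: cinv0 inner_commute)
  then have "cinv 0 y \<bullet> oc = 1 / (2 * norm y ^2)"
    unfolding assms(2) by simp
  ultimately have "norm (cinv 0 y - oc)^2 = norm oc^2"
    unfolding nd2 by simp
  then show ?thesis by (simp add: power2_eq_iff_nonneg)
qed

lemma cinv_cinv0: "u \<noteq> 0 \<Longrightarrow> cinv 0 (cinv 0 u) = u"
proof -
  assume u: "u \<noteq> 0"
  then have nu: "norm u > 0" by simp
  have "norm (cinv 0 u) = 1 / norm u" using cinv_norm[of u 0] u by simp
  then have "cinv 0 (cinv 0 u) = (1 / (1 / norm u)^2) *\<^sub>R ((1 / norm u ^ 2) *\<^sub>R u)"
    by (simp add: cinv0)
  also have "\<dots> = u" using nu by (simp add: power_divide)
  finally show ?thesis .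
qed

lemma cinv0_eq: "cinv 0 y = (1 / norm y ^ 2) *\<^sub>R y"
  by (rule cinv0)

lemma H2help:
  fixes x oc ya yb eta :: "'a::euclidean_space"
  assumes "norm (x - oc) = norm oc" "x = c1 *\<^sub>R ya + c2 *\<^sub>R yb + c3 *\<^sub>R eta"
    "ya \<bullet> oc = 1/2" "yb \<bullet> oc = 1/2" "eta \<bullet> oc = f"
  shows "norm x ^2 = c1 + c2 + c3 * (2 * f)"
proof -
  have "norm x ^ 2 = 2 * (x \<bullet> oc)" by (rule arc_normsq[OF assms(1)])
  also have "x \<bullet> oc = c1 * (ya \<bullet> oc) + c2 * (yb \<bullet> oc) + c3 * (eta \<bullet> oc)"
    unfolding assms(2) by (simp add: inner_add_left)
  finally show ?thesis using assms(3-5) by simp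
qed

lemma seg_sq_le:
  fixes a b :: "'a::euclidean_space"
  assumes "s \<in> {0..1}"
  shows "norm ((1 - s) *\<^sub>R a + s *\<^sub>R b)^2 \<le> (1 - s) * norm a^2 + s * norm b^2"
proof -
  have e: "(1 - s) * norm a^2 + s * norm b^2 - norm ((1 - s) *\<^sub>R a + s *\<^sub>R b)^2 = s * (1 - s) * norm (a - b)^2"
    unfolding power2_norm_eq_inner
    by (simp add: inner_add_left inner_add_right inner_diff_left inner_diff_right inner_commute algebra_simps)
  have "s * (1 - s) * norm (a - b)^2 \<ge> 0" using assms by simp
  then show ?thesis using e by simp
qed

lemma comb3:
  fixes ya yb eta :: "'a::real_vector"
  shows "(1 - K) *\<^sub>R (al *\<^sub>R ya + be *\<^sub>R yb + ga *\<^sub>R eta) + (K * (1 - s)) *\<^sub>R ((1/Na) *\<^sub>R ya) + (K * s) *\<^sub>R ((1/Nb) *\<^sub>R yb)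
    = ((1 - K) * al + K * (1 - s) / Na) *\<^sub>R ya + ((1 - K) * be + K * s / Nb) *\<^sub>R yb + ((1 - K) * ga) *\<^sub>R eta"
  by (simp add: scaleR_add_right scaleR_add_left add_ac)

lemma GR2_0:
  fixes ya yb m :: "'a::euclidean_space"
  assumes ya: "ya \<noteq> 0" and yb: "yb \<noteq> 0"
    and ab: "dist (cinv 0 ya) (cinv 0 yb) < 2"
    and nz: "0 \<notin> conv_c {cinv 0 ya, cinv 0 yb}"
    and lam: "0 \<le> lam" "lam \<le> 1" and m: "norm m \<le> 1/2"
  shows "\<exists>x t. x \<in> conv_c {cinv 0 ya, cinv 0 yb} \<and> x \<noteq> 0 \<and> t \<ge> 0 \<and>
           cinv 0 x = ((1 - lam) *\<^sub>R ya + lam *\<^sub>R yb) + t *\<^sub>R (((1 - lam) *\<^sub>R ya + lam *\<^sub>R yb) - m)"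
proof -
  define a where "a = cinv 0 ya"
  define b where "b = cinv 0 yb"
  define u where "u = (1 - lam) *\<^sub>R ya + lam *\<^sub>R yb"
  define Na where "Na = norm ya ^ 2"
  define Nb where "Nb = norm yb ^ 2"
  define g where "g = ya \<bullet> yb"
  define D where "D = Na * Nb - g^2"
  have Na0: "Na > 0" using ya by (simp add: Na_def)
  have Nb0: "Nb > 0" using yb by (simp add: Nb_def)
  have aform: "a = (1/Na) *\<^sub>R ya" by (simp add: a_def cinv0 Na_def)
  have bform: "b = (1/Nb) *\<^sub>R yb" by (simp add: b_def cinv0 Nb_def)
  have yaya: "ya \<bullet> ya = Na" by (simp add: Na_def power2_norm_eq_inner)
  have ybyb: "yb \<bullet> yb = Nb" by (simp add: Nb_def power2_norm_eq_inner)
  have ybya: "yb \<bullet> ya = g" by (simp add: g_def inner_commute)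
  have na2: "norm a ^ 2 = 1 / Na" unfolding aform using Na0 by (simp add: Na_def power_divide power2_eq_square)
  have nb2: "norm b ^ 2 = 1 / Nb" unfolding bform using Nb0 by (simp add: Nb_def power_divide power2_eq_square)
  have hull_ab: "convex hull {a, b} \<subseteq> conv_c {a, b}" by (rule hull_sub_conv_c)
  have seg_ab: "(1 - s) *\<^sub>R a + s *\<^sub>R b \<in> conv_c {a, b}" if "s \<in> {0..1}" for s
  proof -
    have "(1 - s) *\<^sub>R a + s *\<^sub>R b \<in> closed_segment a b"
      using that by (auto simp: closed_segment_def)
    then show ?thesis using hull_ab by (auto simp: segment_convex_hull)
  qed
  have nz': "0 \<notin> conv_c {a, b}" using nz by (simp add: a_def b_def)
  have ab': "dist a b < 2" using ab by (simp add: a_def b_def)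
  have D0: "D \<ge> 0"
  proof -
    have "\<bar>g\<bar> \<le> norm ya * norm yb" unfolding g_def by (rule Cauchy_Schwarz_ineq2)
    then have "\<bar>g\<bar>^2 \<le> (norm ya * norm yb)^2" by (intro power_mono) auto
    then show ?thesis by (simp add: D_def Na_def Nb_def power_mult_distrib)
  qed
  show ?thesis
  proof (cases "D = 0")
    case True
    have "\<bar>g\<bar>^2 = (norm ya * norm yb)^2"
      using True by (simp add: D_def Na_def Nb_def power_mult_distrib)
    then have "\<bar>g\<bar> = norm ya * norm yb"
      by (rule power2_eq_imp_eq) auto
    then have cs: "norm ya *\<^sub>R yb = norm yb *\<^sub>R ya \<or> norm ya *\<^sub>R yb = - (norm yb *\<^sub>R ya)"
      using norm_cauchy_schwarz_abs_eq[of ya yb] by (simp add: g_def)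
    define k where "k = norm yb / norm ya"
    have k0: "k > 0" using ya yb by (simp add: k_def)
    have nya: "norm ya > 0" using ya by simp
    have Nbk: "Nb = k^2 * Na"
      using nya by (simp add: Nb_def Na_def k_def power_divide)
    from cs show ?thesis
    proof
      assume eq: "norm ya *\<^sub>R yb = norm yb *\<^sub>R ya"
      have "yb = (1 / norm ya) *\<^sub>R (norm ya *\<^sub>R yb)" using nya by simp
      also have "\<dots> = (1 / norm ya) *\<^sub>R (norm yb *\<^sub>R ya)" using eq by simp
      also have "\<dots> = k *\<^sub>R ya" by (simp add: k_def)
      finally have ybk: "yb = k *\<^sub>R ya" .
      define r where "r = (1 - lam) + lam * k"
      have r0: "r > 0"
      proof (cases "lam = 0")
        case True then show ?thesis by (simp add: r_def)
      next
        case False then have "lam > 0" using lam by simp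
        then have "lam * k > 0" using k0 by simp
        then show ?thesis using lam by (simp add: r_def)
      qed
      have ur: "u = r *\<^sub>R ya" by (simp add: u_def ybk r_def algebra_simps)
      have unz: "u \<noteq> 0" using ur r0 ya by simp
      define x where "x = cinv 0 u"
      have x1: "x = (1 / (r * Na)) *\<^sub>R ya"
        using r0 Na0 by (simp add: x_def cinv0 ur Na_def power_mult_distrib power2_eq_square)
      define mu where "mu = lam * k / r"
      have mu0: "0 \<le> mu" using lam k0 r0 by (simp add: mu_def)
      have mu1: "mu \<le> 1" using lam k0 r0 by (simp add: mu_def r_def)
      have bk: "b = (1 / (k * Na)) *\<^sub>R ya"
        using k0 Na0 by (simp add: bform ybk Nbk power2_eq_square)
      have "(1 - mu) *\<^sub>R a + mu *\<^sub>R b = ((1 - mu) / Na + mu / (k * Na)) *\<^sub>R ya"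
        by (simp add: aform bk algebra_simps)
      also have "(1 - mu) / Na + mu / (k * Na) = 1 / (r * Na)"
      proof -
        have "(1 - mu) / Na + mu / (k * Na) = ((1 - mu) * k + mu) / (k * Na)"
          using k0 Na0 by (simp add: field_simps)
        also have "(1 - mu) * k + mu = k / r"
        proof -
          have "(1 - mu) * k + mu = (r * k - lam * k * k + lam * k) / r"
            using r0 by (simp add: mu_def field_simps)
          also have "r * k - lam * k * k + lam * k = k * (r - lam * k + lam)" by (simp add: algebra_simps)
          also have "r - lam * k + lam = 1" by (simp add: r_def)
          finally show ?thesis by simp
        qed
        also have "(k / r) / (k * Na) = 1 / (r * Na)" using k0 by simp
        finally show ?thesis .
      qed
      finally have xseg: "x = (1 - mu) *\<^sub>R a + mu *\<^sub>R b" by (simp add: x1)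
      have xC: "x \<in> conv_c {a, b}" using seg_ab[of mu] mu0 mu1 xseg by simp
      have "x \<noteq> 0" using xC nz' by auto
      moreover have "cinv 0 x = u" by (simp add: x_def cinv_cinv0 unz)
      moreover have "x \<in> conv_c {cinv 0 ya, cinv 0 yb}" using xC by (simp only: a_def b_def)
      moreover have "cinv 0 x = u + 0 *\<^sub>R (u - m)" using \<open>cinv 0 x = u\<close> by simp
      ultimately have fin: "x \<in> conv_c {cinv 0 ya, cinv 0 yb} \<and> x \<noteq> 0 \<and> (0::real) \<ge> 0 \<and> cinv 0 x = u + 0 *\<^sub>R (u - m)"
        by (intro conjI) simp_all
      show ?thesis unfolding u_def[symmetric] by (rule exI[of _ x], rule exI[of _ 0], rule fin)
    next
      assume eq: "norm ya *\<^sub>R yb = - (norm yb *\<^sub>R ya)"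
      have "yb = (1 / norm ya) *\<^sub>R (norm ya *\<^sub>R yb)" using nya by simp
      also have "\<dots> = (1 / norm ya) *\<^sub>R (- (norm yb *\<^sub>R ya))" using eq by simp
      also have "\<dots> = (- k) *\<^sub>R ya" by (simp add: k_def)
      finally have ybk: "yb = (- k) *\<^sub>R ya" .
      define mu where "mu = k / (1 + k)"
      have mu0: "0 \<le> mu" "mu \<le> 1" using k0 by (auto simp: mu_def)
      have bk: "b = (- (1 / (k * Na))) *\<^sub>R ya"
        using k0 Na0 by (simp add: bform ybk Nbk power2_eq_square)
      have "(1 - mu) *\<^sub>R a + mu *\<^sub>R b = ((1 - mu) / Na - mu / (k * Na)) *\<^sub>R ya"
        by (simp add: aform bk algebra_simps)
      also have "(1 - mu) / Na - mu / (k * Na) = 0"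
      proof -
        have "mu / k = 1 / (1 + k)" using k0 by (simp add: mu_def)
        moreover have "1 - mu = 1 / (1 + k)" using k0 by (simp add: mu_def field_simps)
        ultimately have "(1 - mu) / Na = (mu / k) / Na" by simp
        then show ?thesis by simp
      qed
      finally have "0 \<in> conv_c {a, b}" using seg_ab[of mu] mu0 by simp
      then show ?thesis using nz' by simp
    qed
  next
    case False
    then have Dpos: "D > 0" using D0 by simp
    define al where "al = (Nb - g) / (2 * D)"
    define be where "be = (Na - g) / (2 * D)"
    define o2 where "o2 = al *\<^sub>R ya + be *\<^sub>R yb"
    have o2ya: "ya \<bullet> o2 = 1/2"
    proof -
      have "ya \<bullet> o2 = al * Na + be * g" by (simp add: o2_def inner_add_right yaya g_def)
      also have "\<dots> = ((Nb - g) * Na + (Na - g) * g) / (2 * D)"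
        by (simp add: al_def be_def add_divide_distrib)
      also have "(Nb - g) * Na + (Na - g) * g = D" by (simp add: D_def power2_eq_square algebra_simps)
      finally show ?thesis using Dpos by simp
    qed
    have o2yb: "yb \<bullet> o2 = 1/2"
    proof -
      have "yb \<bullet> o2 = al * g + be * Nb" by (simp add: o2_def inner_add_right ybyb ybya)
      also have "\<dots> = ((Nb - g) * g + (Na - g) * Nb) / (2 * D)"
        by (simp add: al_def be_def add_divide_distrib)
      also have "(Nb - g) * g + (Na - g) * Nb = D" by (simp add: D_def power2_eq_square algebra_simps)
      finally show ?thesis using Dpos by simp
    qed
    have ao: "norm (a - oc) = norm oc" if "ya \<bullet> oc = 1/2" for oc
      using cinv_dist_o[OF ya, of oc] that by (simp add: a_def inner_commute)
    have bo: "norm (b - oc) = norm oc" if "yb \<bullet> oc = 1/2" for oc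
      using cinv_dist_o[OF yb, of oc] that by (simp add: b_def inner_commute)
    show ?thesis
    proof (cases "norm o2 \<ge> 1")
      case True
      define R where "R = norm o2"
      have R1: "R \<ge> 1" using True by (simp add: R_def)
      have ra: "norm (a - o2) = R" using ao[OF o2ya] by (simp add: R_def)
      have rb: "norm (b - o2) = R" using bo[OF o2yb] by (simp add: R_def)
      define V where "V s = (1 - s) *\<^sub>R (a - o2) + s *\<^sub>R (b - o2)" for s
      define K where "K s = R / norm (V s)" for s
      define x where "x s = o2 + K s *\<^sub>R V s" for s
      define k1 where "k1 s = (1 - K s) * al + K s * (1 - s) / Na" for s
      define k2 where "k2 s = (1 - K s) * be + K s * s / Nb" for s
      have xmem: "x s \<in> conv_c {a, b}" if "s \<in> {0..1}" for s
        using arc_mem[OF R1 ra rb ab' that] by (simp add: x_def K_def V_def)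
      have xdist: "norm (x s - o2) = norm o2" if "s \<in> {0..1}" for s
        using arc_x_dist[OF R1 ra rb ab' that] by (simp add: x_def K_def V_def R_def)
      have Kc: "continuous_on {0..1} K"
        using arc_cont[OF R1 ra rb ab'] by (simp add: K_def[abs_def] V_def)
      have K0: "K 0 = 1" using ra R1 by (simp add: K_def V_def)
      have K1: "K 1 = 1" using rb R1 by (simp add: K_def V_def)
      have xform: "x s = k1 s *\<^sub>R ya + k2 s *\<^sub>R yb + (0::real) *\<^sub>R (0::'a)" for s
      proof -
        have "x s = (1 - K s) *\<^sub>R o2 + (K s * (1 - s)) *\<^sub>R a + (K s * s) *\<^sub>R b"
          unfolding x_def V_def by (rule arc_form)
        also have "\<dots> = k1 s *\<^sub>R ya + k2 s *\<^sub>R yb + ((1 - K s) * 0) *\<^sub>R (0::'a)"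
          using comb3[of "K s" al ya be yb 0 0 s Na Nb] unfolding o2_def aform bform k1_def k2_def by simp
        finally show ?thesis by simp
      qed
      have "\<exists>s\<in>{0..1}. - (\<lambda>s. 0) s / norm (x s)^2 \<ge> 0 \<and> cinv 0 (x s) = u + (- (\<lambda>s. 0) s / norm (x s)^2) *\<^sub>R (u - 0)"
      proof (rule G[where eta=0 and m=0 and am=0 and bm=0 and e=1 and kc="\<lambda>s. 0" and ka=k1 and kb=k2])
        show "(0::'a) = 0 *\<^sub>R ya + 0 *\<^sub>R yb + 0" by simp
        show "(1::real) = 1 - 0 - 0" by simp
        show "u = (1 - lam) *\<^sub>R ya + lam *\<^sub>R yb" by (simp add: u_def)
        show "0 \<le> lam" "lam \<le> 1" using lam by auto
        show "x s = k1 s *\<^sub>R ya + k2 s *\<^sub>R yb + 0 *\<^sub>R 0" for s using xform[of s] by simp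
        show "norm (x s)^2 = k1 s + k2 s + 0 * 1" if "s \<in> {0..1}" for s
          using H2help[OF xdist[OF that] xform[of s] o2ya o2yb, of 0] by simp
        show "x s \<noteq> 0" if "s \<in> {0..1}" for s using xmem[OF that] nz' by auto
        show "(0::real) \<le> 0" for s :: real by simp
        show "continuous_on {0..1} k1" unfolding k1_def[abs_def] using Na0 by (intro continuous_intros Kc) auto
        show "continuous_on {0..1} k2" unfolding k2_def[abs_def] using Nb0 by (intro continuous_intros Kc) auto
        show "continuous_on {0..1} (\<lambda>s. 0::real)" by (intro continuous_intros)
        show "k2 0 = 0" by (simp add: k2_def K0)
        show "k1 1 = 0" by (simp add: k1_def K1)
      qed simp_all
      then obtain s where sI: "s \<in> {0..1}" and cx: "cinv 0 (x s) = u" by auto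
      have "x s \<in> conv_c {cinv 0 ya, cinv 0 yb}" using xmem[OF sI] by (simp only: a_def b_def)
      moreover have "x s \<noteq> 0" using xmem[OF sI] nz' by auto
      moreover have "cinv 0 (x s) = u + 0 *\<^sub>R (u - m)" using cx by simp
      ultimately have fin: "x s \<in> conv_c {cinv 0 ya, cinv 0 yb} \<and> x s \<noteq> 0 \<and> (0::real) \<ge> 0 \<and> cinv 0 (x s) = u + 0 *\<^sub>R (u - m)"
        by (intro conjI) simp_all
      show ?thesis unfolding u_def[symmetric] by (rule exI[of _ "x s"], rule exI[of _ 0], rule fin)
    next
      case False
      then have o2lt: "norm o2 < 1" by simp
      define am where "am = (Nb * (m \<bullet> ya) - g * (m \<bullet> yb)) / D"
      define bm where "bm = (Na * (m \<bullet> yb) - g * (m \<bullet> ya)) / D"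
      define eta where "eta = m - (am *\<^sub>R ya + bm *\<^sub>R yb)"
      have mdec: "m = am *\<^sub>R ya + bm *\<^sub>R yb + eta" by (simp add: eta_def)
      have eya: "ya \<bullet> eta = 0"
      proof -
        have "ya \<bullet> eta = m \<bullet> ya - (am * Na + bm * g)"
          by (simp add: eta_def inner_diff_right inner_add_right yaya g_def inner_commute)
        also have "am * Na + bm * g = (m \<bullet> ya) * D / D"
          by (simp add: am_def bm_def D_def add_divide_distrib[symmetric] power2_eq_square algebra_simps)
        also have "(m \<bullet> ya) * D / D = m \<bullet> ya" using Dpos by simp
        finally show ?thesis by simp
      qed
      have eyb: "yb \<bullet> eta = 0"
      proof -
        have "yb \<bullet> eta = m \<bullet> yb - (am * g + bm * Nb)"
          by (simp add: eta_def inner_diff_right inner_add_right ybyb g_def inner_commute)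
        also have "am * g + bm * Nb = (m \<bullet> yb) * D / D"
          by (simp add: am_def bm_def D_def add_divide_distrib[symmetric] power2_eq_square algebra_simps)
        also have "(m \<bullet> yb) * D / D = m \<bullet> yb" using Dpos by simp
        finally show ?thesis by simp
      qed
      have o2eta: "eta \<bullet> o2 = 0"
        by (simp add: o2_def inner_add_right inner_commute[of eta] eya eyb)
      have o2m: "m \<bullet> o2 = (am + bm) / 2"
        unfolding mdec by (simp add: inner_add_left o2ya o2yb o2eta)
      define e where "e = 1 - am - bm"
      have epos: "e > 0"
      proof -
        have "m \<bullet> o2 \<le> norm m * norm o2" by (rule norm_cauchy_schwarz)
        also have "\<dots> < 1/2"
        proof (cases "norm m = 0")
          case True then show ?thesis by simp
        next
          case False
          then have "norm m > 0" by simp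
          then have "norm m * norm o2 < norm m * 1" using o2lt by (intro mult_strict_left_mono)
          then show ?thesis using m by simp
        qed
        finally show ?thesis using o2m by (simp add: e_def)
      qed
      show ?thesis
      proof (cases "eta = 0")
        case True
        define x where "x s = (1 - s) *\<^sub>R a + s *\<^sub>R b" for s
        define k1 where "k1 s = (1 - s) / Na" for s
        define k2 where "k2 s = s / Nb" for s
        define k3 where "k3 s = (norm (x s)^2 - k1 s - k2 s) / e" for s
        have xmem: "x s \<in> conv_c {a, b}" if "s \<in> {0..1}" for s
          using seg_ab[OF that] by (simp add: x_def)
        have "\<exists>s\<in>{0..1}. - k3 s / norm (x s)^2 \<ge> 0 \<and> cinv 0 (x s) = u + (- k3 s / norm (x s)^2) *\<^sub>R (u - m)"
        proof (rule G[where eta=eta and m=m and am=am and bm=bm and e=e and kc=k3 and ka=k1 and kb=k2])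
          show "m = am *\<^sub>R ya + bm *\<^sub>R yb + eta" by (rule mdec)
          show "e = 1 - am - bm" by (simp add: e_def)
          show "u = (1 - lam) *\<^sub>R ya + lam *\<^sub>R yb" by (simp add: u_def)
          show "0 \<le> lam" "lam \<le> 1" using lam by auto
          show "x s = k1 s *\<^sub>R ya + k2 s *\<^sub>R yb + k3 s *\<^sub>R eta" for s
            using True by (simp add: x_def k1_def k2_def aform bform)
          show "norm (x s)^2 = k1 s + k2 s + k3 s * e" for s
            using epos by (simp add: k3_def)
          show "x s \<noteq> 0" if "s \<in> {0..1}" for s using xmem[OF that] nz' by auto
          show "k3 s \<le> 0" if "s \<in> {0..1}" for s
          proof -
            have "norm (x s)^2 \<le> (1 - s) * norm a^2 + s * norm b^2"
              unfolding x_def by (rule seg_sq_le[OF that])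
            then have "norm (x s)^2 - k1 s - k2 s \<le> 0"
              by (simp add: k1_def k2_def na2 nb2)
            then show ?thesis using epos by (simp add: k3_def divide_nonpos_pos)
          qed
          show "continuous_on {0..1} k1" unfolding k1_def[abs_def] using Na0 by (intro continuous_intros) auto
          show "continuous_on {0..1} k2" unfolding k2_def[abs_def] using Nb0 by (intro continuous_intros) auto
          show "continuous_on {0..1} k3" unfolding k3_def[abs_def] x_def k1_def k2_def
            using Na0 Nb0 epos by (intro continuous_intros) auto
          show "k2 0 = 0" by (simp add: k2_def)
          show "k3 0 = 0" by (simp add: k3_def x_def k1_def k2_def na2)
          show "k1 1 = 0" by (simp add: k1_def)
          show "k3 1 = 0" by (simp add: k3_def x_def k1_def k2_def nb2)
        qed
        then obtain s where sI: "s \<in> {0..1}" and t0: "- k3 s / norm (x s)^2 \<ge> 0"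
          and cx: "cinv 0 (x s) = u + (- k3 s / norm (x s)^2) *\<^sub>R (u - m)" by blast
        have "x s \<in> conv_c {cinv 0 ya, cinv 0 yb}" using xmem[OF sI] by (simp only: a_def b_def)
        moreover have "x s \<noteq> 0" using xmem[OF sI] nz' by auto
        ultimately have fin: "x s \<in> conv_c {cinv 0 ya, cinv 0 yb} \<and> x s \<noteq> 0 \<and> - k3 s / norm (x s)^2 \<ge> 0 \<and>
            cinv 0 (x s) = u + (- k3 s / norm (x s)^2) *\<^sub>R (u - m)"
          using t0 cx by (intro conjI) simp_all
        show ?thesis unfolding u_def[symmetric] by (rule exI[of _ "x s"], rule exI, rule fin)
      next
        case False
        then have ne: "norm eta > 0" by simp
        define ga where "ga = (e / 2) / norm eta ^ 2"
        have ga0: "ga > 0" using epos ne by (simp add: ga_def)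
        define o3 where "o3 = o2 + ga *\<^sub>R eta"
        have o3ya: "ya \<bullet> o3 = 1/2" by (simp add: o3_def inner_add_right o2ya eya)
        have o3yb: "yb \<bullet> o3 = 1/2" by (simp add: o3_def inner_add_right o2yb eyb)
        have o3eta: "eta \<bullet> o3 = e / 2"
        proof -
          have "eta \<bullet> o3 = ga * norm eta ^ 2"
            by (simp add: o3_def inner_add_right o2eta power2_norm_eq_inner)
          then show ?thesis using ne by (simp add: ga_def)
        qed
        have o3m: "m \<bullet> o3 = 1/2"
        proof -
          have "m \<bullet> o3 = am * (ya \<bullet> o3) + bm * (yb \<bullet> o3) + eta \<bullet> o3"
            unfolding mdec by (simp add: inner_add_left)
          also have "\<dots> = am / 2 + bm / 2 + (1 - am - bm) / 2"
            by (simp add: o3ya o3yb o3eta e_def)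
          also have "\<dots> = 1/2" by (simp add: field_simps)
          finally show ?thesis .
        qed
        define R where "R = norm o3"
        have R1: "R \<ge> 1"
        proof -
          have "1/2 \<le> norm m * norm o3" using o3m norm_cauchy_schwarz[of m o3] by simp
          also have "\<dots> \<le> (1/2) * norm o3" using m by (intro mult_right_mono) auto
          finally show ?thesis by (simp add: R_def)
        qed
        have ra: "norm (a - o3) = R" using ao[OF o3ya] by (simp add: R_def)
        have rb: "norm (b - o3) = R" using bo[OF o3yb] by (simp add: R_def)
        define V where "V s = (1 - s) *\<^sub>R (a - o3) + s *\<^sub>R (b - o3)" for s
        define K where "K s = R / norm (V s)" for s
        define x where "x s = o3 + K s *\<^sub>R V s" for s
        define k1 where "k1 s = (1 - K s) * al + K s * (1 - s) / Na" for s
        define k2 where "k2 s = (1 - K s) * be + K s * s / Nb" for s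
        define k3 where "k3 s = (1 - K s) * ga" for s
        have xmem: "x s \<in> conv_c {a, b}" if "s \<in> {0..1}" for s
          using arc_mem[OF R1 ra rb ab' that] by (simp add: x_def K_def V_def)
        have xdist: "norm (x s - o3) = norm o3" if "s \<in> {0..1}" for s
          using arc_x_dist[OF R1 ra rb ab' that] by (simp add: x_def K_def V_def R_def)
        have Kc: "continuous_on {0..1} K"
          using arc_cont[OF R1 ra rb ab'] by (simp add: K_def[abs_def] V_def)
        have Kge: "K s \<ge> 1" if "s \<in> {0..1}" for s
          using arc_K_ge[OF R1 ra rb ab' that] by (simp add: K_def V_def)
        have K0: "K 0 = 1" using ra R1 by (simp add: K_def V_def)
        have K1: "K 1 = 1" using rb R1 by (simp add: K_def V_def)
        have xform: "x s = k1 s *\<^sub>R ya + k2 s *\<^sub>R yb + k3 s *\<^sub>R eta" for s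
        proof -
          have "x s = (1 - K s) *\<^sub>R o3 + (K s * (1 - s)) *\<^sub>R a + (K s * s) *\<^sub>R b"
            unfolding x_def V_def by (rule arc_form)
          also have "\<dots> = k1 s *\<^sub>R ya + k2 s *\<^sub>R yb + k3 s *\<^sub>R eta"
            using comb3[of "K s" al ya be yb ga eta s Na Nb] unfolding o3_def o2_def aform bform k1_def k2_def k3_def
            by (simp add: add.assoc)
          finally show ?thesis .
        qed
        have "\<exists>s\<in>{0..1}. - k3 s / norm (x s)^2 \<ge> 0 \<and> cinv 0 (x s) = u + (- k3 s / norm (x s)^2) *\<^sub>R (u - m)"
        proof (rule G[where eta=eta and m=m and am=am and bm=bm and e=e and kc=k3 and ka=k1 and kb=k2])
          show "m = am *\<^sub>R ya + bm *\<^sub>R yb + eta" by (rule mdec)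
          show "e = 1 - am - bm" by (simp add: e_def)
          show "u = (1 - lam) *\<^sub>R ya + lam *\<^sub>R yb" by (simp add: u_def)
          show "0 \<le> lam" "lam \<le> 1" using lam by auto
          show "x s = k1 s *\<^sub>R ya + k2 s *\<^sub>R yb + k3 s *\<^sub>R eta" for s by (rule xform)
          show "norm (x s)^2 = k1 s + k2 s + k3 s * e" if "s \<in> {0..1}" for s
            using H2help[OF xdist[OF that] xform[of s] o3ya o3yb o3eta] by simp
          show "x s \<noteq> 0" if "s \<in> {0..1}" for s using xmem[OF that] nz' by auto
          show "k3 s \<le> 0" if "s \<in> {0..1}" for s
            using Kge[OF that] ga0 by (simp add: k3_def mult_nonpos_nonneg)
          show "continuous_on {0..1} k1" unfolding k1_def[abs_def] using Na0 by (intro continuous_intros Kc) auto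
          show "continuous_on {0..1} k2" unfolding k2_def[abs_def] using Nb0 by (intro continuous_intros Kc) auto
          show "continuous_on {0..1} k3" unfolding k3_def[abs_def] by (intro continuous_intros Kc)
          show "k2 0 = 0" by (simp add: k2_def K0)
          show "k3 0 = 0" by (simp add: k3_def K0)
          show "k1 1 = 0" by (simp add: k1_def K1)
          show "k3 1 = 0" by (simp add: k3_def K1)
        qed
        then obtain s where sI: "s \<in> {0..1}" and t0: "- k3 s / norm (x s)^2 \<ge> 0"
          and cx: "cinv 0 (x s) = u + (- k3 s / norm (x s)^2) *\<^sub>R (u - m)" by blast
        have "x s \<in> conv_c {cinv 0 ya, cinv 0 yb}" using xmem[OF sI] by (simp only: a_def b_def)
        moreover have "x s \<noteq> 0" using xmem[OF sI] nz' by auto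
        ultimately have fin: "x s \<in> conv_c {cinv 0 ya, cinv 0 yb} \<and> x s \<noteq> 0 \<and> - k3 s / norm (x s)^2 \<ge> 0 \<and>
            cinv 0 (x s) = u + (- k3 s / norm (x s)^2) *\<^sub>R (u - m)"
          using t0 cx by (intro conjI) simp_all
        show ?thesis unfolding u_def[symmetric] by (rule exI[of _ "x s"], rule exI, rule fin)
      qed
    qed
  qed
qed

lemma cinv_shift: "cinv p x = cinv 0 (x - p)"
  by (simp add: cinv_def)

lemma GR2:
  fixes a b p m :: "'a::euclidean_space"
  assumes a: "a \<noteq> p" and b: "b \<noteq> p" and ab: "dist a b < 2"
    and nz: "p \<notin> conv_c {a, b}"
    and lam: "0 \<le> lam" "lam \<le> 1" and m: "norm m \<le> 1/2"
  shows "\<exists>x t. x \<in> conv_c {a, b} \<and> x \<noteq> p \<and> t \<ge> 0 \<and>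
           cinv p x = ((1 - lam) *\<^sub>R cinv p a + lam *\<^sub>R cinv p b) + t *\<^sub>R (((1 - lam) *\<^sub>R cinv p a + lam *\<^sub>R cinv p b) - m)"
proof -
  define ya where "ya = cinv p a"
  define yb where "yb = cinv p b"
  have ya0: "ya \<noteq> 0" using a cinv_norm[of a p] by (auto simp: ya_def)
  have yb0: "yb \<noteq> 0" using b cinv_norm[of b p] by (auto simp: yb_def)
  have ia: "cinv 0 ya = a - p" using a unfolding ya_def cinv_shift[of p a] by (simp add: cinv_cinv0)
  have ib: "cinv 0 yb = b - p" using b unfolding yb_def cinv_shift[of p b] by (simp add: cinv_cinv0)
  have tr: "(\<lambda>s. s + p) ` {a - p, b - p} = {a, b}" by auto
  have ab': "dist (cinv 0 ya) (cinv 0 yb) < 2" using ab by (simp add: ia ib dist_norm)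
  have nz': "0 \<notin> conv_c {cinv 0 ya, cinv 0 yb}"
  proof
    assume "0 \<in> conv_c {cinv 0 ya, cinv 0 yb}"
    then have "0 + p \<in> conv_c ((\<lambda>s. s + p) ` {a - p, b - p})"
      using conv_c_translate[of 0 "{a - p, b - p}" p] by (simp add: ia ib)
    then show False using nz tr by simp
  qed
  obtain x t where x: "x \<in> conv_c {cinv 0 ya, cinv 0 yb}" "x \<noteq> 0" "t \<ge> 0"
    "cinv 0 x = ((1 - lam) *\<^sub>R ya + lam *\<^sub>R yb) + t *\<^sub>R (((1 - lam) *\<^sub>R ya + lam *\<^sub>R yb) - m)"
    using GR2_0[OF ya0 yb0 ab' nz' lam m] by blast
  have "x + p \<in> conv_c {a, b}"
    using x(1) conv_c_translate[of x "{a - p, b - p}" p] by (simp add: ia ib tr)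
  moreover have "x + p \<noteq> p" using x(2) by simp
  moreover have "cinv p (x + p) = cinv 0 x" unfolding cinv_def by simp
  ultimately have fin: "x + p \<in> conv_c {a, b} \<and> x + p \<noteq> p \<and> t \<ge> 0 \<and>
      cinv p (x + p) = ((1 - lam) *\<^sub>R ya + lam *\<^sub>R yb) + t *\<^sub>R (((1 - lam) *\<^sub>R ya + lam *\<^sub>R yb) - m)"
    using x(3,4) by (intro conjI) simp_all
  show ?thesis unfolding ya_def[symmetric] yb_def[symmetric] by (rule exI, rule exI, rule fin)
qed

lemma P2:
  fixes a b p z0 :: "'a::euclidean_space"
  assumes r: "r < 1" and a: "a \<in> cball z0 r" and b: "b \<in> cball z0 r"
    and T: "T \<subseteq> cball z0 r" "finite T" "T \<noteq> {}"
    and p: "p \<in> cball z0 r" and pC: "p \<in> conv_c (insert a (insert b T))"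
  shows "\<exists>x \<in> conv_c {a, b}. p \<in> conv_c (insert x T)"
proof (cases "p \<in> conv_c {a, b}")
  case True
  then show ?thesis using sub_conv_c by blast
next
  case pab: False
  show ?thesis
  proof (cases "p \<in> T")
    case True
    have "a \<in> conv_c {a, b}" using sub_conv_c by blast
    moreover have "p \<in> conv_c (insert a T)" using True sub_conv_c by blast
    ultimately show ?thesis by blast
  next
    case pT: False
    have pa: "p \<noteq> a" and pb: "p \<noteq> b" using pab sub_conv_c by blast+
    have pz: "dist p z0 < 1" using p r by (simp add: mem_cball dist_commute)
    have ab: "dist a b < 2"
    proof -
      have "dist a b \<le> dist z0 a + dist z0 b" by (rule dist_triangle3)
      also have "\<dots> \<le> r + r" using a b by (intro add_mono) (auto simp: mem_cball)
      finally show ?thesis using r by simp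
    qed
    let ?S = "insert a (insert b T)"
    have Sb: "?S \<subseteq> cball z0 r" using a b T by auto
    have cS: "compact ?S" using T by (intro finite_imp_compact) simp
    have pS: "p \<notin> ?S" using pa pb pT by simp
    obtain y where yH: "y \<in> convex hull (cinv p ` ?S)" and ny: "norm y \<le> 1/2"
      using K_iff[OF r Sb cS _ pz pS] pC by blast
    define G where "G = cinv p ` T"
    have Gne: "G \<noteq> {}" using T by (simp add: G_def)
    have img: "cinv p ` ?S = {cinv p a, cinv p b} \<union> G" by (auto simp: G_def)
    have "convex hull (cinv p ` ?S) \<subseteq> convex hull (convex hull {cinv p a, cinv p b} \<union> convex hull G)"
      unfolding img by (intro hull_mono Un_mono hull_subset)
    also have "\<dots> = {u *\<^sub>R s + v *\<^sub>R t |u v s t. u \<ge> 0 \<and> v \<ge> 0 \<and> u + v = 1 \<and>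
        s \<in> convex hull {cinv p a, cinv p b} \<and> t \<in> convex hull G}"
      using Gne by (intro convex_hull_union_two) auto
    finally obtain ga' gb uu k where dec: "ga' \<ge> 0" "gb \<ge> 0" "ga' + gb = 1"
      "uu \<in> convex hull {cinv p a, cinv p b}" "k \<in> convex hull G" "y = ga' *\<^sub>R uu + gb *\<^sub>R k"
      using yH by blast
    obtain lam where lam: "0 \<le> lam" "lam \<le> 1" "uu = (1 - lam) *\<^sub>R cinv p a + lam *\<^sub>R cinv p b"
      using dec(4) by (auto simp: segment_convex_hull[symmetric] closed_segment_def)
    have g1: "ga' = 1 - gb" using dec(3) by simp
    have yform: "y = (1 - gb) *\<^sub>R uu + gb *\<^sub>R k" using dec(6) unfolding g1 .
    show ?thesis
    proof (cases "gb = 1")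
      case True
      then have "y = k" using yform by simp
      then have "y \<in> convex hull (cinv p ` T)" using dec(5) by (simp add: G_def)
      then have "p \<in> conv_c T"
        using K_iff[OF r T(1) finite_imp_compact[OF T(2)] T(3) pz pT] ny by blast
      then have "p \<in> conv_c (insert a T)" using conv_c_mono[of T "insert a T"] by blast
      moreover have "a \<in> conv_c {a, b}" using sub_conv_c by blast
      ultimately show ?thesis by blast
    next
      case False
      then have gb1: "gb < 1" using dec by simp
      show ?thesis
      proof (cases "gb = 0")
        case True
        then have "y \<in> convex hull (cinv p ` {a, b})" using yform dec(4) by simp
        then have "p \<in> conv_c {a, b}"
          using K_iff[OF r _ _ _ pz, of "{a, b}"] a b pa pb ny by (auto intro: finite_imp_compact)
        then show ?thesis using pab by simp
      next
        case False
        then have gb0: "gb > 0" using dec by simp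
        obtain x t where x: "x \<in> conv_c {a, b}" "x \<noteq> p" "t \<ge> 0"
          "cinv p x = uu + t *\<^sub>R (uu - y)"
          using GR2[OF pa[symmetric] pb[symmetric] ab pab lam(1,2) ny] lam(3) by blast
        define cx where "cx = cinv p x"
        define sg where "sg = gb * (1 + t) / (1 + t * gb)"
        have den: "1 + t * gb > 0" using x(3) gb0 by (simp add: add_pos_nonneg)
        have sg0: "0 \<le> sg" using x(3) gb0 den by (simp add: sg_def)
        have sg1: "sg \<le> 1" using x(3) gb1 den by (simp add: sg_def field_simps)
        have e1: "(1 + t * gb) * (1 - sg) = 1 - gb" using den by (simp add: sg_def field_simps)
        have e2: "(1 + t * gb) * sg = gb * (1 + t)" using den by (simp add: sg_def)
        have hk: "gb *\<^sub>R k = y - (1 - gb) *\<^sub>R uu" using yform by simp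
        have "(1 + t * gb) *\<^sub>R ((1 - sg) *\<^sub>R cx + sg *\<^sub>R k) = ((1 + t * gb) * (1 - sg)) *\<^sub>R cx + ((1 + t * gb) * sg) *\<^sub>R k"
          by (simp only: scaleR_add_right scaleR_scaleR)
        also have "\<dots> = (1 - gb) *\<^sub>R cx + (gb * (1 + t)) *\<^sub>R k" by (simp only: e1 e2)
        also have "\<dots> = (1 - gb) *\<^sub>R cx + (1 + t) *\<^sub>R (gb *\<^sub>R k)" by (simp add: mult.commute)
        also have "\<dots> = (1 + t * gb) *\<^sub>R y"
          unfolding hk cx_def x(4) by (simp add: algebra_simps)
        finally have "(1 - sg) *\<^sub>R cx + sg *\<^sub>R k = y" using den by simp
        moreover have "cx \<in> convex hull (cinv p ` insert x T)" by (rule hull_inc) (simp add: cx_def)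
        moreover have "k \<in> convex hull (cinv p ` insert x T)"
          using dec(5) hull_mono[of G "cinv p ` insert x T"] by (auto simp: G_def)
        ultimately have yH': "y \<in> convex hull (cinv p ` insert x T)"
          using convexD[OF convex_convex_hull, of cx _ k "1 - sg" sg] sg0 sg1 by (metis diff_add_cancel diff_ge_0_iff_ge)
        have "{a, b} \<subseteq> cball z0 r" using a b by auto
        then have xb: "x \<in> cball z0 r" using x(1) conv_c_in_ball[OF r, of "{a, b}" z0] by auto
        have "p \<in> conv_c (insert x T)"
          using K_iff[OF r _ _ _ pz, of "insert x T"] xb T x(2) pT yH' ny
          by (auto intro: finite_imp_compact)
        then show ?thesis using x(1) by blast
      qed
    qed
  qed
qed

lemma L_join1:
  fixes p z0 :: "'a::euclidean_space"
  assumes r: "r < 1" and p: "p \<in> cball z0 r"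
    and S: "finite S" "S \<noteq> {}"
  shows "S \<subseteq> cball z0 r \<Longrightarrow> finite T \<Longrightarrow> T \<noteq> {} \<Longrightarrow> T \<subseteq> cball z0 r \<Longrightarrow>
         p \<in> conv_c (S \<union> T) \<Longrightarrow> \<exists>x \<in> conv_c S. p \<in> conv_c (insert x T)"
  using S
proof (induction S arbitrary: T rule: finite_ne_induct)
  case (singleton s)
  have "s \<in> conv_c {s}" using sub_conv_c by blast
  moreover have "p \<in> conv_c (insert s T)" using singleton.prems(5) by simp
  ultimately show ?case by blast
next
  case (insert s S0)
  have S0b: "S0 \<subseteq> cball z0 r" and sb: "s \<in> cball z0 r" using insert.prems(1) by auto
  have "p \<in> conv_c (S0 \<union> insert s T)" using insert.prems(5) by simp
  moreover have "finite (insert s T)" "insert s T \<noteq> {}" "insert s T \<subseteq> cball z0 r"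
    using insert.prems(2,4) sb by auto
  ultimately have "\<exists>x \<in> conv_c S0. p \<in> conv_c (insert x (insert s T))"
    using insert.IH S0b by blast
  then obtain x0 where x0: "x0 \<in> conv_c S0" "p \<in> conv_c (insert x0 (insert s T))" by blast
  have x0b: "x0 \<in> cball z0 r" using x0(1) conv_c_in_ball[OF r S0b] by auto
  obtain x where x: "x \<in> conv_c {x0, s}" "p \<in> conv_c (insert x T)"
    using P2[OF r x0b sb insert.prems(4) insert.prems(2) insert.prems(3) p x0(2)] by blast
  have "{x0, s} \<subseteq> conv_c (insert s S0)"
    using x0(1) conv_c_mono[of S0 "insert s S0"] sub_conv_c[of "insert s S0"] by auto
  then have "x \<in> conv_c (insert s S0)" using x(1) conv_c_subset by blast
  then show ?case using x(2) by blast
qed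

lemma join2:
  fixes p z0 :: "'a::euclidean_space"
  assumes r: "r < 1" and p: "p \<in> cball z0 r"
    and S: "finite S" "S \<noteq> {}" "S \<subseteq> cball z0 r"
    and T: "finite T" "T \<noteq> {}" "T \<subseteq> cball z0 r"
    and pC: "p \<in> conv_c (S \<union> T)"
  shows "\<exists>x \<in> conv_c S. \<exists>y \<in> conv_c T. p \<in> conv_c {x, y}"
proof -
  obtain x where x: "x \<in> conv_c S" "p \<in> conv_c (insert x T)"
    using L_join1[OF r p S(1,2) S(3) T pC] by blast
  have xb: "x \<in> cball z0 r" using x(1) conv_c_in_ball[OF r S(3)] by auto
  have "p \<in> conv_c (T \<union> {x})" using x(2) by simp
  then obtain y where y: "y \<in> conv_c T" "p \<in> conv_c (insert y {x})"
    using L_join1[OF r p T(1,2) T(3), of "{x}"] xb by auto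
  have "{x, y} = insert y {x}" by auto
  then have "p \<in> conv_c {x, y}" using y(2) by simp
  then show ?thesis using x(1) y(1) by blast
qed

lemma cseq_fin:
  fixes A :: "'a::euclidean_space set"
  assumes r: "r < 1" and A: "A \<subseteq> cball z0 r"
  shows "finite F \<Longrightarrow> F \<noteq> {} \<Longrightarrow> F \<subseteq> A \<Longrightarrow> card F \<le> 2 ^ j \<Longrightarrow> conv_c F \<subseteq> cseq A j"
proof (induction j arbitrary: F)
  case 0
  then have "card F = 1" using card_gt_0_iff[of F] by simp
  then obtain a where "F = {a}" by (rule card_1_singletonE)
  then show ?case using 0 by (simp add: conv_c_singleton)
next
  case (Suc j)
  show ?case
  proof (cases "card F \<le> 2 ^ j")
    case True
    then show ?thesis using Suc.IH[OF Suc.prems(1-3)] cseq_Suc_mono by blast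
  next
    case False
    then have big: "2 ^ j \<le> card F" by simp
    obtain S where S: "S \<subseteq> F" "card S = 2 ^ j" "finite S"
      using obtain_subset_with_card_n[OF big] by blast
    define T where "T = F - S"
    have Sne: "S \<noteq> {}" using S(2) by auto
    have Tfin: "finite T" using Suc.prems(1) by (simp add: T_def)
    have cT: "card T = card F - 2 ^ j" using S Suc.prems(1) by (simp add: T_def card_Diff_subset)
    have Tne: "T \<noteq> {}" using cT False Tfin by auto
    have Tc: "card T \<le> 2 ^ j" using cT Suc.prems(4) by simp
    have FST: "F = S \<union> T" using S(1) by (auto simp: T_def)
    have Fb: "F \<subseteq> cball z0 r" using Suc.prems(3) A by auto
    have CS: "conv_c S \<subseteq> cseq A j" using Suc.IH[OF S(3) Sne _ ] S(1,2) Suc.prems(3) by auto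
    have CT: "conv_c T \<subseteq> cseq A j" using Suc.IH[OF Tfin Tne _ Tc] Suc.prems(3) by (auto simp: T_def)
    show ?thesis
    proof
      fix p assume pF: "p \<in> conv_c F"
      have pb: "p \<in> cball z0 r" using pF conv_c_in_ball[OF r Fb] by auto
      obtain x y where xy: "x \<in> conv_c S" "y \<in> conv_c T" "p \<in> conv_c {x, y}"
        using join2[OF r pb S(3) Sne _ Tfin Tne _] pF FST Fb by auto
      have "x \<in> cseq A j" "y \<in> cseq A j" using xy CS CT by auto
      then show "p \<in> cseq A (Suc j)" using xy(3) by (simp only: cseq.simps) blast
    qed
  qed
qed

lemma conv_c_empty: "conv_c ({} :: 'a::euclidean_space set) = {}"
proof -
  have "x \<notin> conv_c {}" for x :: 'a
  proof
    assume x: "x \<in> conv_c {}"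
    define v :: 'a where "v = (SOME v. norm v = 1)"
    have nv: "norm v = 1" unfolding v_def by (rule someI_ex) (metis norm_Basis SOME_Basis)
    have "dist (x + 2 *\<^sub>R v) x \<le> 1" using x by (auto simp: mem_conv_c)
    then show False using nv by (simp add: dist_norm)
  qed
  then show ?thesis by auto
qed

lemma cinv_inj: "p \<notin> A \<Longrightarrow> inj_on (cinv p) A"
proof (rule inj_onI)
  fix x y assume pA: "p \<notin> A" and xy: "x \<in> A" "y \<in> A" "cinv p x = cinv p y"
  have "x - p \<noteq> 0" "y - p \<noteq> 0" using pA xy by auto
  then have "x - p = y - p"
    using xy(3) cinv_cinv0[of "x - p"] cinv_cinv0[of "y - p"] by (metis cinv_shift)
  then show "x = y" by simp
qed

theorem theorem4p25:
  fixes A :: "'a::euclidean_space set"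
  assumes "DIM('a) \<ge> 2"
    and "closed A"
    and "Outrad A < 1"
  shows "(\<forall>j. cseq A j \<subseteq> conv_c A) \<and>
         (\<forall>j. 2 ^ j > DIM('a) \<longrightarrow> cseq A j = conv_c A)"
proof (intro conjI allI impI)
  fix j show "cseq A j \<subseteq> conv_c A" by (rule cseq_sub)
next
  fix j :: nat assume j: "2 ^ j > DIM('a)"
  have j1: "j \<ge> 1"
  proof (rule ccontr)
    assume "\<not> j \<ge> 1" then have "j = 0" by simp
    then show False using j assms(1) by simp
  qed
  show "cseq A j = conv_c A"
  proof
    show "cseq A j \<subseteq> conv_c A" by (rule cseq_sub)
    show "conv_c A \<subseteq> cseq A j"
    proof (cases "A = {}")
      case True then show ?thesis by (simp add: conv_c_empty)
    next
      case Ane: False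
      show ?thesis
      proof (cases "bounded A")
        case False
        obtain a where a: "a \<in> A" using Ane by auto
        have "\<exists>y\<in>A. dist a y > 2"
        proof (rule ccontr)
          assume "\<not> ?thesis"
          then have "\<forall>y\<in>A. dist a y \<le> 2" by auto
          then have "bounded A" unfolding bounded_def by blast
          then show False using False by simp
        qed
        then obtain b where b: "b \<in> A" "dist a b > 2" by blast
        have "conv_c {a, b} = UNIV" by (rule conv_c_far[OF b(2)])
        moreover have "conv_c {a, b} \<subseteq> cseq A 1" using a b(1) by auto
        ultimately have "cseq A 1 = UNIV" by auto
        then have "cseq A j = UNIV" using cseq_mono[OF j1, of A] by auto
        then show ?thesis by simp
      next
        case True
        define X where "X = {R. \<exists>z. A \<subseteq> cball z R}"
        have "X \<noteq> {}" using True by (auto simp: X_def bounded_subset_cball)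
        then obtain R where R: "R \<in> X" "R < 1"
          using cInf_lessD[of X 1] assms(3) by (auto simp: Outrad_def X_def)
        then obtain z0 where Ab: "A \<subseteq> cball z0 R" by (auto simp: X_def)
        have cA: "compact A" using True assms(2) by (simp add: compact_eq_bounded_closed)
        show ?thesis
        proof
          fix p assume pC: "p \<in> conv_c A"
          show "p \<in> cseq A j"
          proof (cases "p \<in> A")
            case True
            then show ?thesis using cseq_mono[of 0 j A] by auto
          next
            case pA: False
            have pb: "p \<in> cball z0 R" using pC conv_c_in_ball[OF R(2) Ab] by auto
            have pz: "dist p z0 < 1" using pb R(2) by (simp add: mem_cball dist_commute)
            obtain y where yH: "y \<in> convex hull (cinv p ` A)" and ny: "norm y \<le> 1/2"
              using K_iff[OF R(2) Ab cA Ane pz pA] pC by blast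
            have "y \<in> {x. \<exists>S. finite S \<and> S \<subseteq> cinv p ` A \<and> card S \<le> DIM('a) + 1 \<and> x \<in> convex hull S}"
              using yH by (simp only: caratheodory[of "cinv p ` A"])
            then obtain S' where S': "finite S'" "S' \<subseteq> cinv p ` A" "card S' \<le> DIM('a) + 1" "y \<in> convex hull S'"
              by blast
            obtain F where F: "F \<subseteq> A" "finite F" "S' = cinv p ` F"
              using finite_subset_image[OF S'(1) S'(2)] by blast
            have injF: "inj_on (cinv p) F" using cinv_inj[of p F] pA F(1) by auto
            have cF: "card F \<le> DIM('a) + 1" using S'(3) F(3) card_image[OF injF] by simp
            have Fne: "F \<noteq> {}" using S'(4) F(3) by auto
            have Fb: "F \<subseteq> cball z0 R" using F(1) Ab by auto
            have pF: "p \<notin> F" using pA F(1) by auto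
            have "p \<in> conv_c F"
              using K_iff[OF R(2) Fb finite_imp_compact[OF F(2)] Fne pz pF] S'(4) F(3) ny by blast
            moreover have "card F \<le> 2 ^ j" using cF j by simp
            ultimately show ?thesis using cseq_fin[OF R(2) Ab F(2) Fne F(1)] by blast
          qed
        qed
      qed
    qed
  qed
qed

end
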